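(* Let $P$ be a finite graded poset with unique minimal element $\hat0$ and rank function $\rho$ with $\rho(\hat0)=0$, and let $\theta$ be an equivalence relation on $P$ such that $\rho$ is constant on $\theta$-classes. Equip $P/\theta$ with the transitive closure $\preceq$ of the quotient relation $\leqslant_\theta$ (a graded partial order with rank $[p]\mapsto\rho(p)$ and unique minimal element $[\hat0]$). Suppose that for every $p\in P$, $$\sum_{[q]\preceq[p]}\ \sum_{r\in[q]}\mu_P(r)=\begin{cases}1 & \text{if } [p]=[\hat0],\\ 0 & \text{otherwise}.\end{cases}$$ Then $\mu_{P/\theta}([p])=\sum_{q\in[p]}\mu_P(q)$ for all $p\in P$, and $\chi_{P/\theta}(t)=\chi_P(t)$.
   Context: For a finite poset $P$ with unique minimal element $\hat0$, the Möbius function $\mu_P\colon P\to\mathbb Z$ is defined recursively by $\sum_{p\leqslant q}\mu_P(p)=\delta_{\hat0,q}$ for all $q\in P$. A poset is graded with rank function $\rho$ if $p<q\Rightarrow\rho(p)<\rho(q)$ and $p\lessdot q\Rightarrow\rho(q)=\rho(p)+1$; for graded $P$ with $\rho(\hat0)=0$, $\rho(P)$ denotes the maximal value of $\rho$, and the characteristic polynomial is $\chi_P(t)=\sum_{p\in P}\mu_P(p)t^{\rho(P)-\rho(p)}$. The quotient relation is $[p]\leqslant_\theta[q]$ iff there exist $p'\in[p]$, $q'\in[q]$ with $p'\leqslant q'$. *)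

theory Defs
  imports "HOL-Computational_Algebra.Polynomial"
begin

definition partial_order_on' :: "'a set \<Rightarrow> ('a \<Rightarrow> 'a \<Rightarrow> bool) \<Rightarrow> bool" where
  "partial_order_on' S le \<longleftrightarrow>
     (\<forall>x\<in>S. le x x) \<and>
     (\<forall>x\<in>S. \<forall>y\<in>S. le x y \<and> le y x \<longrightarrow> x = y) \<and>
     (\<forall>x\<in>S. \<forall>y\<in>S. \<forall>z\<in>S. le x y \<and> le y z \<longrightarrow> le x z)"

definition unique_minimal :: "'a set \<Rightarrow> ('a \<Rightarrow> 'a \<Rightarrow> bool) \<Rightarrow> 'a \<Rightarrow> bool" where
  "unique_minimal S le z \<longleftrightarrow> z \<in> S \<and>
     (\<forall>x\<in>S. (\<forall>y\<in>S. le y x \<longrightarrow> y = x) \<longleftrightarrow> x = z)"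

definition covers :: "'a set \<Rightarrow> ('a \<Rightarrow> 'a \<Rightarrow> bool) \<Rightarrow> 'a \<Rightarrow> 'a \<Rightarrow> bool" where
  "covers S le p q \<longleftrightarrow> p \<in> S \<and> q \<in> S \<and> le p q \<and> p \<noteq> q \<and>
     \<not> (\<exists>r\<in>S. le p r \<and> le r q \<and> r \<noteq> p \<and> r \<noteq> q)"

definition graded_by :: "'a set \<Rightarrow> ('a \<Rightarrow> 'a \<Rightarrow> bool) \<Rightarrow> ('a \<Rightarrow> nat) \<Rightarrow> bool" where
  "graded_by S le rho \<longleftrightarrow>
     (\<forall>p\<in>S. \<forall>q\<in>S. le p q \<and> p \<noteq> q \<longrightarrow> rho p < rho q) \<and>
     (\<forall>p q. covers S le p q \<longrightarrow> rho q = rho p + 1)"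

definition moebius :: "'a set \<Rightarrow> ('a \<Rightarrow> 'a \<Rightarrow> bool) \<Rightarrow> 'a \<Rightarrow> 'a \<Rightarrow> int" where
  "moebius S le z = (THE f. (\<forall>q\<in>S. (\<Sum>p\<in>{p\<in>S. le p q}. f p) = (if q = z then 1 else 0))
                          \<and> (\<forall>x. x \<notin> S \<longrightarrow> f x = 0))"

definition char_poly :: "'a set \<Rightarrow> ('a \<Rightarrow> 'a \<Rightarrow> bool) \<Rightarrow> 'a \<Rightarrow> ('a \<Rightarrow> nat) \<Rightarrow> int poly" where
  "char_poly S le z rho =
     (\<Sum>p\<in>S. monom (moebius S le z p) (Max (rho ` S) - rho p))"

definition quot_rel :: "('a \<Rightarrow> 'a \<Rightarrow> bool) \<Rightarrow> 'a set \<Rightarrow> 'a set \<Rightarrow> bool" where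
  "quot_rel le X Y \<longleftrightarrow> (\<exists>p\<in>X. \<exists>q\<in>Y. le p q)"

definition quot_order :: "'a set \<Rightarrow> 'a rel \<Rightarrow> ('a \<Rightarrow> 'a \<Rightarrow> bool) \<Rightarrow> 'a set \<Rightarrow> 'a set \<Rightarrow> bool" where
  "quot_order S \<theta> le = tranclp (\<lambda>X Y. X \<in> S // \<theta> \<and> Y \<in> S // \<theta> \<and> quot_rel le X Y)"

definition quot_rank :: "('a \<Rightarrow> nat) \<Rightarrow> 'a set \<Rightarrow> nat" where
  "quot_rank rho X = rho (SOME p. p \<in> X)"

end

theory Submission
  imports Defs
begin

theorem mainTheorem15:
  fixes P :: "'a set" and le :: "'a \<Rightarrow> 'a \<Rightarrow> bool" and z :: 'a
    and rho :: "'a \<Rightarrow> nat" and \<theta> :: "'a rel"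
  assumes fin: "finite P"
    and po: "partial_order_on' P le"
    and zmin: "unique_minimal P le z"
    and graded: "graded_by P le rho"
    and rho0: "rho z = 0"
    and eqv: "equiv P \<theta>"
    and const: "\<forall>(p, q)\<in>\<theta>. rho p = rho q"
    and hyp: "\<forall>p\<in>P. (\<Sum>Q\<in>{Q\<in>P // \<theta>. quot_order P \<theta> le Q (\<theta> `` {p})}.
                         \<Sum>r\<in>Q. moebius P le z r)
                    = (if \<theta> `` {p} = \<theta> `` {z} then 1 else 0)"
  shows "(\<forall>p\<in>P. moebius (P // \<theta>) (quot_order P \<theta> le) (\<theta> `` {z}) (\<theta> `` {p})
                = (\<Sum>q\<in>\<theta> `` {p}. moebius P le z q))
         \<and> char_poly (P // \<theta>) (quot_order P \<theta> le) (\<theta> `` {z}) (quot_rank rho)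
           = char_poly P le z rho"
proof -
  define C where "C = P // \<theta>"
  define Qo where "Qo = quot_order P \<theta> le"
  define mu where "mu = moebius P le z"
  define F where "F = (\<lambda>X. if X \<in> C then (\<Sum>r\<in>X. mu r) else 0)"
  have finC: "finite C" unfolding C_def using fin eqv by (simp add: finite_quotient equiv_type)
  have sub: "\<And>X. X \<in> C \<Longrightarrow> X \<subseteq> P" unfolding C_def using eqv in_quotient_imp_subset by blast
  have ne: "\<And>X. X \<in> C \<Longrightarrow> X \<noteq> {}" unfolding C_def using eqv in_quotient_imp_non_empty by blast
  have samerho: "\<And>X p q. X \<in> C \<Longrightarrow> p \<in> X \<Longrightarrow> q \<in> X \<Longrightarrow> rho p = rho q"
  proof -
    fix X p q assume "X \<in> C" "p \<in> X" "q \<in> X"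
    then have "(p,q) \<in> \<theta>" unfolding C_def using in_quotient_imp_in_rel[OF eqv, of X p q] by simp
    then show "rho p = rho q" using const by auto
  qed
  have same: "\<And>X Y p. X \<in> C \<Longrightarrow> Y \<in> C \<Longrightarrow> p \<in> X \<Longrightarrow> p \<in> Y \<Longrightarrow> X = Y"
    unfolding C_def using eqv quotient_disj by blast
  have refl: "\<And>X. X \<in> C \<Longrightarrow> Qo X X"
  proof -
    fix X assume X: "X \<in> C"
    then obtain p where "p \<in> X" using ne by blast
    moreover have "le p p" using po sub[OF X] \<open>p \<in> X\<close> unfolding partial_order_on'_def by blast
    ultimately show "Qo X X" unfolding Qo_def quot_order_def quot_rel_def using X C_def by blast
  qed
  have rk: "Qo X Y \<Longrightarrow> X \<in> C \<and> Y \<in> C \<and> (\<forall>p\<in>X. \<forall>q\<in>Y. rho p \<le> rho q \<and> (rho p = rho q \<longrightarrow> X = Y))" for X Y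
    unfolding Qo_def quot_order_def
  proof (induction rule: tranclp_induct)
    case (base Y)
    then have XC: "X \<in> C" and YC: "Y \<in> C" and qr: "quot_rel le X Y" by (auto simp: C_def)
    then obtain p' q' where p': "p' \<in> X" and q': "q' \<in> Y" and l: "le p' q'" unfolding quot_rel_def by blast
    have "p' \<in> P" "q' \<in> P" using sub XC YC p' q' by auto
    have "\<forall>p\<in>X. \<forall>q\<in>Y. rho p \<le> rho q \<and> (rho p = rho q \<longrightarrow> X = Y)"
    proof (intro ballI)
      fix p q assume p: "p \<in> X" and q: "q \<in> Y"
      have e1: "rho p = rho p'" using samerho XC p p' by blast
      have e2: "rho q = rho q'" using samerho YC q q' by blast
      show "rho p \<le> rho q \<and> (rho p = rho q \<longrightarrow> X = Y)"
      proof (cases "p' = q'")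
        case True then show ?thesis using e1 e2 same XC YC p' q' by auto
      next
        case False
        then have "rho p' < rho q'" using graded l \<open>p' \<in> P\<close> \<open>q' \<in> P\<close> unfolding graded_by_def by blast
        then show ?thesis using e1 e2 by auto
      qed
    qed
    then show ?case using XC YC by blast
  next
    case (step Y W)
    then have XC: "X \<in> C" and YC: "Y \<in> C" and WC: "W \<in> C" and qr: "quot_rel le Y W"
      and IH: "\<forall>p\<in>X. \<forall>q\<in>Y. rho p \<le> rho q \<and> (rho p = rho q \<longrightarrow> X = Y)" by (auto simp: C_def)
    then obtain p' q' where p': "p' \<in> Y" and q': "q' \<in> W" and l: "le p' q'" unfolding quot_rel_def by blast
    have "p' \<in> P" "q' \<in> P" using sub YC WC p' q' by auto
    have "\<forall>p\<in>X. \<forall>q\<in>W. rho p \<le> rho q \<and> (rho p = rho q \<longrightarrow> X = W)"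
    proof (intro ballI)
      fix p q assume p: "p \<in> X" and q: "q \<in> W"
      have e2: "rho q = rho q'" using samerho WC q q' by blast
      have i: "rho p \<le> rho p' \<and> (rho p = rho p' \<longrightarrow> X = Y)" using IH p p' by blast
      show "rho p \<le> rho q \<and> (rho p = rho q \<longrightarrow> X = W)"
      proof (cases "p' = q'")
        case True then have "Y = W" using same YC WC p' q' by auto
        then show ?thesis using e2 i True by auto
      next
        case False
        then have "rho p' < rho q'" using graded l \<open>p' \<in> P\<close> \<open>q' \<in> P\<close> unfolding graded_by_def by blast
        then show ?thesis using e2 i by auto
      qed
    qed
    then show ?case using XC WC by blast
  qed
  define r where "r = quot_rank rho"
  have rdef: "\<And>X p. X \<in> C \<Longrightarrow> p \<in> X \<Longrightarrow> r X = rho p"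
  proof -
    fix X p assume X: "X \<in> C" and p: "p \<in> X"
    then have "(SOME p. p \<in> X) \<in> X" by (meson someI)
    then show "r X = rho p" unfolding r_def quot_rank_def using samerho X p by blast
  qed
  have rless: "\<And>X Y. Qo X Y \<Longrightarrow> X \<noteq> Y \<Longrightarrow> r X < r Y"
  proof -
    fix X Y assume q: "Qo X Y" and d: "X \<noteq> Y"
    from rk[OF q] have XC: "X \<in> C" and YC: "Y \<in> C"
      and h: "\<forall>p\<in>X. \<forall>q\<in>Y. rho p \<le> rho q \<and> (rho p = rho q \<longrightarrow> X = Y)" by auto
    obtain p q where p: "p \<in> X" and qq: "q \<in> Y" using ne XC YC by blast
    show "r X < r Y" using h p qq d rdef[OF XC p] rdef[OF YC qq] by force
  qed
  define Phi where "Phi = (\<lambda>f. (\<forall>q\<in>C. (\<Sum>p\<in>{p\<in>C. Qo p q}. f p) = (if q = \<theta>``{z} then 1 else 0))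
                          \<and> (\<forall>x. x \<notin> C \<longrightarrow> f x = (0::int)))"
  have PhiF: "Phi F"
    unfolding Phi_def
  proof (intro conjI ballI allI impI)
    fix Q assume Q: "Q \<in> C"
    then obtain p where p: "p \<in> P" and Qp: "Q = \<theta>``{p}" unfolding C_def by (blast elim: quotientE)
    have "(\<Sum>X\<in>{X\<in>C. Qo X Q}. F X) = (\<Sum>X\<in>{X\<in>C. Qo X Q}. \<Sum>r\<in>X. mu r)"
      by (rule sum.cong) (auto simp: F_def)
    also have "\<dots> = (if Q = \<theta>``{z} then 1 else 0)" using hyp p Qp unfolding C_def Qo_def mu_def by simp
    finally show "(\<Sum>X\<in>{X\<in>C. Qo X Q}. F X) = (if Q = \<theta>``{z} then 1 else 0)" .
  next
    fix x assume "x \<notin> C" then show "F x = 0" by (simp add: F_def)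
  qed
  have uniq: "g = F" if g: "Phi g" for g
  proof -
    have "\<forall>X\<in>C. r X = n \<longrightarrow> g X = F X" for n
    proof (induction n rule: less_induct)
      case (less n)
      show ?case
      proof (intro ballI impI)
        fix X assume X: "X \<in> C" and rn: "r X = n"
        let ?A = "{Y\<in>C. Qo Y X}"
        have finA: "finite ?A" using finC by simp
        have XA: "X \<in> ?A" using X refl by simp
        have eqrest: "(\<Sum>Y\<in>?A - {X}. g Y) = (\<Sum>Y\<in>?A - {X}. F Y)"
        proof (rule sum.cong)
          fix Y assume "Y \<in> ?A - {X}"
          then have "Y \<in> C" "r Y < n" using rless rn by auto
          then show "g Y = F Y" using less by blast
        qed simp
        have "g X + (\<Sum>Y\<in>?A - {X}. g Y) = (\<Sum>Y\<in>?A. g Y)" by (rule sum.remove[OF finA XA, symmetric])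
        also have "\<dots> = (\<Sum>Y\<in>?A. F Y)" using g PhiF X unfolding Phi_def by simp
        also have "\<dots> = F X + (\<Sum>Y\<in>?A - {X}. F Y)" by (rule sum.remove[OF finA XA])
        finally show "g X = F X" using eqrest by simp
      qed
    qed
    then have "\<forall>X\<in>C. g X = F X" by blast
    moreover have "\<forall>X. X \<notin> C \<longrightarrow> g X = F X" using g PhiF unfolding Phi_def by simp
    ultimately show ?thesis by blast
  qed
  have mq: "moebius C Qo (\<theta>``{z}) = F"
    unfolding moebius_def using PhiF uniq unfolding Phi_def by (rule the_equality)
  have part1: "\<forall>p\<in>P. moebius C Qo (\<theta>``{z}) (\<theta>``{p}) = (\<Sum>q\<in>\<theta>``{p}. mu q)"
    using mq by (simp add: F_def C_def quotientI)
  have rimg: "r ` C = rho ` P"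
  proof
    show "r ` C \<subseteq> rho ` P"
    proof
      fix k assume "k \<in> r ` C"
      then obtain X where X: "X \<in> C" and k: "k = r X" by blast
      obtain p where "p \<in> X" using ne X by blast
      then show "k \<in> rho ` P" using rdef X k sub by blast
    qed
  next
    show "rho ` P \<subseteq> r ` C"
    proof
      fix k assume "k \<in> rho ` P"
      then obtain p where p: "p \<in> P" and k: "k = rho p" by blast
      have "\<theta>``{p} \<in> C" using p by (simp add: C_def quotientI)
      moreover have "p \<in> \<theta>``{p}" using eqv p equiv_class_self by fast
      ultimately show "k \<in> r ` C" using rdef k by force
    qed
  qed
  define M where "M = Max (rho ` P)"
  have "char_poly C Qo (\<theta>``{z}) r = (\<Sum>X\<in>C. monom (F X) (M - r X))"
    unfolding char_poly_def mq rimg M_def by simp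
  also have "\<dots> = (\<Sum>X\<in>C. \<Sum>q\<in>X. monom (mu q) (M - rho q))"
  proof (rule sum.cong)
    fix X assume X: "X \<in> C"
    have "monom (F X) (M - r X) = (\<Sum>q\<in>X. monom (mu q) (M - r X))"
      using X by (simp add: F_def monom_sum)
    also have "\<dots> = (\<Sum>q\<in>X. monom (mu q) (M - rho q))"
      using rdef[OF X] by (intro sum.cong) auto
    finally show "monom (F X) (M - r X) = (\<Sum>q\<in>X. monom (mu q) (M - rho q))" .
  qed simp
  also have "\<dots> = (\<Sum>q\<in>\<Union>C. monom (mu q) (M - rho q))"
  proof -
    have a: "\<forall>A\<in>C. finite A" using sub fin finite_subset by blast
    have b: "\<forall>A\<in>C. \<forall>B\<in>C. A \<noteq> B \<longrightarrow> A \<inter> B = {}" using eqv quotient_disj unfolding C_def by blast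
    show ?thesis using sum.Union_disjoint[OF a b, of "\<lambda>q. monom (mu q) (M - rho q)"] by (simp only: comp_def)
  qed
  also have "\<dots> = char_poly P le z rho"
    unfolding char_poly_def M_def mu_def C_def Union_quotient[OF eqv] by simp
  finally show ?thesis using part1 unfolding C_def Qo_def r_def mu_def by simp
qed

end
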